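(* Let $(N,m)$ be a marked P/T net and $\mathcal U[N,m]=(O,m')$ its unfolding. Under the identification of a token of colour $(h,i)$ in place $a$ of $[\![N]\!]$ with the place $a(h,i)$ of $O$, and of a firing of transition $\mathsf t$ of $[\![N]\!]$ under substitution $\sigma$ with the unfolding transition $\mathsf t(H)$ where $H$ is the set of consumed tokens ${}^\bullet\mathsf t_{[\![N]\!]}\sigma$: for every firing sequence $s$ and marking $m''$, $[\![(N,m)]\!]\xrightarrow{s}([\![N]\!],m'')$ if and only if $(O,m')\xrightarrow{s}(O,m'')$.
   Context: A P/T net $N=(S_N,T_N,{}^\bullet\_,\_^\bullet)$ has disjoint sets of places and transitions and nonempty preset/postset multisets ${}^\bullet\mathsf t,\mathsf t^\bullet$ over $S_N$; markings are multisets of places and firing is: if ${}^\bullet\mathsf t=m_1$, $\mathsf t^\bullet=m_2$ then $(N,m_1\oplus m_3)\xrightarrow{\mathsf t}(N,m_2\oplus m_3)$. Unfolding: with $\preceq$ the reflexive-transitive closure of $\{(a,\mathsf t)\mid a\in{}^\bullet\mathsf t\}\cup\{(\mathsf t,a)\mid a\in\mathsf t^\bullet\}$, $x\#y$ iff there are transitions $\mathsf t_1\preceq x$, $\mathsf t_2\preceq y$, $\mathsf t_1\ne\mathsf t_2$, ${}^\bullet\mathsf t_1\cap{}^\bullet\mathsf t_2\ne\emptyset$, $x\ co\ y$ iff $x\ne y$, $x\not\preceq y$, $y\not\preceq x$, not $x\#y$, and $CO(X)$ iff elements of $X$ are pairwise $co$ and finitely many transitions lie below $X$, the unfolding $\mathcal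 U[N,m]$ is the least net with: places $a(\emptyset,i)$ for $1\le i\le m(a)$; a transition $\mathsf t(H)$ with preset $H$ whenever $H=\{a_j(h_j,i_j)\mid j\in J\}$ is a set of its places with $CO(H)$ and ${}^\bullet\mathsf t=\bigoplus_j a_j$; and for each $x=\mathsf t(H)$ the places $a(\{x\},i)$, $1\le i\le\mathsf t^\bullet(a)$, forming its postset. Its initial marking $m'$ is $\{a(\emptyset,i)\mid 1\le i\le m(a)\}$. Coloured nets: fix infinite sets $\mathcal X$ of variables and $\mathcal C\supseteq\mathcal X$ of colours, where $\mathcal C$ is the least set containing $\mathcal X$ with $(h,n)\in\mathcal C$ for $h\in 2^{\mathcal C}$, $n\in\mathbb N$, and $x(h)\in\mathcal C$ for $x$ a place or transition name and $h\in 2^{\mathcal C}$. A C-P/T net has places, transitions, and pre/postsets that are multisets over $S\times\mathcal C$ (written $a(c)$), with variables of the postset contained in those of the preset; markings are variable-free multisets over $S\times\mathcal C$. Coloured firing: for $\mathsf t=m_1[\rangle m_2$ and a substitution $\sigma:\mathcal X\rightharpoonup\mathcal C$, $(N,m_1\sigma\oplus m_3)\xrightarrow{\mathsf t}(N,m_2\sigma\oplus m_3)$. The encoding $[\![N]\!]$ of a P/T net has the same places and transitions, with ${}^\bullet\mathsf t_{[\![N]\!]}=a_1(x_1)\oplus\dots\oplus a_n(x_n)$ for ${}^\bullet\mathsf t_N=a_1\oplus\dots\oplus a_n$ and pairwise distinct variables $x_i$, and $\mathsf t^\bullet_{[\![N]\!]}=\{a(\{\mathsf t(h)\},i)\mid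 a\in\mathrm{supp}(\mathsf t^\bullet_N),\ 1\le i\le\mathsf t^\bullet_N(a),\ h={}^\bullet\mathsf t_{[\![N]\!]}\}$ (token in place $a$ with colour $(\{\mathsf t(h)\},i)$). A marked net is encoded as $[\![(N,m)]\!]=([\![N]\!],[\![m]\!])$ with $[\![m]\!]=\{a(\emptyset,i)\mid a\in\mathrm{supp}(m),\ 1\le i\le m(a)\}$ (tokens of colour $(\emptyset,i)$ in place $a$). *)

theory Defs
  imports Main "HOL-Library.Multiset" "HOL-Library.FSet"
begin

text \<open>A P/T net with carrier sets of places and transitions (disjoint: they live in
different types) and preset / postset multisets.\<close>
record ('p, 'u) ptnet =
  net_places :: "'p set"
  net_trans  :: "'u set"
  net_pre    :: "'u \<Rightarrow> 'p multiset"
  net_post   :: "'u \<Rightarrow> 'p multiset"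

definition wf_ptnet :: "('p, 'u) ptnet \<Rightarrow> bool" where
  "wf_ptnet N \<longleftrightarrow> (\<forall>t \<in> net_trans N.
      net_pre N t \<noteq> {#} \<and> net_post N t \<noteq> {#} \<and>
      set_mset (net_pre N t) \<subseteq> net_places N \<and> set_mset (net_post N t) \<subseteq> net_places N)"

definition wf_marking :: "('p, 'u) ptnet \<Rightarrow> 'p multiset \<Rightarrow> bool" where
  "wf_marking N m \<longleftrightarrow> set_mset m \<subseteq> net_places N"

definition ptstep :: "('p, 'u) ptnet \<Rightarrow> 'p multiset \<Rightarrow> 'u \<Rightarrow> 'p multiset \<Rightarrow> bool" where
  "ptstep N m t m' \<longleftrightarrow> t \<in> net_trans N \<and>
     (\<exists>m3. m = net_pre N t + m3 \<and> m' = net_post N t + m3)"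

primrec steps :: "('m \<Rightarrow> 'l \<Rightarrow> 'm \<Rightarrow> bool) \<Rightarrow> 'm \<Rightarrow> 'l list \<Rightarrow> 'm \<Rightarrow> bool" where
  "steps R m [] m' \<longleftrightarrow> m' = m"
| "steps R m (x # s) m' \<longleftrightarrow> (\<exists>m1. R m x m1 \<and> steps R m1 s m')"

text \<open>Colours: variables (indexed by nat), pairs (h, n) with h a (finite) set of colours,
and t(H) for a transition name t and a finite set H of coloured places a(c).\<close>
datatype ('s, 't) colour =
    CVar nat
  | CPair "('s, 't) colour fset" nat
  | CTr 't "('s \<times> ('s, 't) colour) fset"

primrec csubst :: "(nat \<Rightarrow> ('s, 't) colour option) \<Rightarrow> ('s, 't) colour \<Rightarrow> ('s, 't) colour" where
  "csubst \<sigma> (CVar x) = (case \<sigma> x of Some c \<Rightarrow> c | None \<Rightarrow> CVar x)"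
| "csubst \<sigma> (CPair h n) = CPair (fimage (csubst \<sigma>) h) n"
| "csubst \<sigma> (CTr t H) = CTr t (fimage (map_prod id (csubst \<sigma>)) H)"

definition msubst :: "(nat \<Rightarrow> ('s, 't) colour option) \<Rightarrow> ('s \<times> ('s, 't) colour) multiset
    \<Rightarrow> ('s \<times> ('s, 't) colour) multiset" where
  "msubst \<sigma> M = image_mset (map_prod id (csubst \<sigma>)) M"

definition fset_of_mset :: "'a multiset \<Rightarrow> 'a fset" where
  "fset_of_mset M = Abs_fset (set_mset M)"

record ('s, 't) cnet =
  cn_places :: "'s set"
  cn_trans  :: "'t set"
  cn_pre    :: "'t \<Rightarrow> ('s \<times> ('s, 't) colour) multiset"
  cn_post   :: "'t \<Rightarrow> ('s \<times> ('s, 't) colour) multiset"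

text \<open>Coloured firing of t under substitution sigma, labelled (under the identification of
the theorem) by the pair (t, H) where H is the set of consumed tokens (pre t) sigma.\<close>
definition cstep :: "('s, 't) cnet \<Rightarrow> ('s \<times> ('s, 't) colour) multiset
    \<Rightarrow> 't \<times> ('s \<times> ('s, 't) colour) fset \<Rightarrow> ('s \<times> ('s, 't) colour) multiset \<Rightarrow> bool" where
  "cstep CN m x m' \<longleftrightarrow> (case x of (t, H) \<Rightarrow> t \<in> cn_trans CN \<and>
     (\<exists>\<sigma> m3. m = msubst \<sigma> (cn_pre CN t) + m3 \<and> m' = msubst \<sigma> (cn_post CN t) + m3 \<and>
             fset H = set_mset (msubst \<sigma> (cn_pre CN t))))"

text \<open>The preset a1 + ... + an becomes a1(x1) + ... + an(xn) with pairwise distinct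
variables (here the variables 0, ..., n-1 for some enumeration of the preset).\<close>
definition enc_pre :: "('s, 't) ptnet \<Rightarrow> 't \<Rightarrow> ('s \<times> ('s, 't) colour) multiset" where
  "enc_pre N t = (let xs = (SOME xs. mset xs = net_pre N t)
                  in mset (map (\<lambda>i. (xs ! i, CVar i)) [0..<length xs]))"

definition enc_post :: "('s, 't) ptnet \<Rightarrow> 't \<Rightarrow> ('s \<times> ('s, 't) colour) multiset" where
  "enc_post N t = mset_set {(a, CPair {| CTr t (fset_of_mset (enc_pre N t)) |} i) | a i.
                               a \<in># net_post N t \<and> 1 \<le> i \<and> i \<le> count (net_post N t) a}"

definition enc_net :: "('s, 't) ptnet \<Rightarrow> ('s, 't) cnet" where
  "enc_net N = \<lparr> cn_places = net_places N, cn_trans = net_trans N,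
                 cn_pre = enc_pre N, cn_post = enc_post N \<rparr>"

definition enc_marking :: "'s multiset \<Rightarrow> ('s \<times> ('s, 't) colour) multiset" where
  "enc_marking m = mset_set {(a, CPair {||} i) | a i. a \<in># m \<and> 1 \<le> i \<and> i \<le> count m a}"

text \<open>Places of the unfolding are coloured places a(h,i) (pairs of a place and a colour),
transitions are t(H) (pairs of a transition and a finite set of such places).\<close>
type_synonym ('s, 't) uplace = "'s \<times> ('s, 't) colour"
type_synonym ('s, 't) utrans = "'t \<times> ('s \<times> ('s, 't) colour) fset"

datatype ('s, 't) unode = UP "('s, 't) uplace" | UT "('s, 't) utrans"

definition upost :: "('s, 't) ptnet \<Rightarrow> ('s, 't) utrans \<Rightarrow> ('s, 't) uplace set" where
  "upost N x = (case x of (t, H) \<Rightarrow>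
     {(a, CPair {| CTr t H |} i) | a i. a \<in># net_post N t \<and> 1 \<le> i \<and> i \<le> count (net_post N t) a})"

definition uflow :: "('s, 't) ptnet \<Rightarrow> (('s, 't) unode \<times> ('s, 't) unode) set" where
  "uflow N = {(UP p, UT (t, H)) | p t H. p |\<in>| H} \<union>
             {(UT x, UP p) | x p. p \<in> upost N x}"

definition ule :: "('s, 't) ptnet \<Rightarrow> ('s, 't) unode \<Rightarrow> ('s, 't) unode \<Rightarrow> bool" where
  "ule N x y \<longleftrightarrow> (x, y) \<in> (uflow N)\<^sup>*"

definition uconfl :: "('s, 't) ptnet \<Rightarrow> ('s, 't) unode \<Rightarrow> ('s, 't) unode \<Rightarrow> bool" where
  "uconfl N x y \<longleftrightarrow> (\<exists>t1 H1 t2 H2. ule N (UT (t1, H1)) x \<and> ule N (UT (t2, H2)) y \<and>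
       (t1, H1) \<noteq> (t2, H2) \<and> H1 |\<inter>| H2 \<noteq> {||})"

definition uco :: "('s, 't) ptnet \<Rightarrow> ('s, 't) unode \<Rightarrow> ('s, 't) unode \<Rightarrow> bool" where
  "uco N x y \<longleftrightarrow> x \<noteq> y \<and> \<not> ule N x y \<and> \<not> ule N y x \<and> \<not> uconfl N x y"

definition uCO :: "('s, 't) ptnet \<Rightarrow> ('s, 't) uplace fset \<Rightarrow> bool" where
  "uCO N X \<longleftrightarrow> (\<forall>x y. x |\<in>| X \<longrightarrow> y |\<in>| X \<longrightarrow> x \<noteq> y \<longrightarrow> uco N (UP x) (UP y)) \<and>
     finite {u. \<exists>x. x |\<in>| X \<and> ule N (UT u) (UP x)}"

inductive uplaces :: "('s, 't) ptnet \<Rightarrow> 's multiset \<Rightarrow> ('s, 't) uplace \<Rightarrow> bool"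
  and utransitions :: "('s, 't) ptnet \<Rightarrow> 's multiset \<Rightarrow> ('s, 't) utrans \<Rightarrow> bool"
  for N :: "('s, 't) ptnet" and m :: "'s multiset" where
  init: "a \<in># m \<Longrightarrow> 1 \<le> i \<Longrightarrow> i \<le> count m a \<Longrightarrow> uplaces N m (a, CPair {||} i)"
| trans: "t \<in> net_trans N \<Longrightarrow> (\<forall>p. p |\<in>| H \<longrightarrow> uplaces N m p) \<Longrightarrow> uCO N H \<Longrightarrow>
          image_mset fst (mset_set (fset H)) = net_pre N t \<Longrightarrow> utransitions N m (t, H)"
| post: "utransitions N m x \<Longrightarrow> p \<in> upost N x \<Longrightarrow> uplaces N m p"

definition unfold_net :: "('s, 't) ptnet \<Rightarrow> 's multiset \<Rightarrow> (('s, 't) uplace, ('s, 't) utrans) ptnet" where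
  "unfold_net N m = \<lparr> net_places = {p. uplaces N m p}, net_trans = {x. utransitions N m x},
       net_pre = (\<lambda>x. mset_set (fset (snd x))), net_post = (\<lambda>x. mset_set (upost N x)) \<rparr>"

definition unfold_marking :: "'s multiset \<Rightarrow> ('s, 't) uplace multiset" where
  "unfold_marking m = mset_set {(a, CPair {||} i) | a i. a \<in># m \<and> 1 \<le> i \<and> i \<le> count m a}"

end

theory Submission
  imports Defs
begin


definition initP :: "'s multiset \<Rightarrow> ('s, 't) uplace set" where
  "initP m = {(a, CPair {||} i) | a i. a \<in># m \<and> 1 \<le> i \<and> i \<le> count m a}"

lemma finite_initP: "finite (initP m)"
proof -
  have "initP m \<subseteq> (\<lambda>(a,i). (a, CPair {||} i)) ` (set_mset m \<times> {0..size m})"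
    unfolding initP_def using count_le_size by (fastforce intro: order_trans)
  then show ?thesis by (rule finite_subset) auto
qed

lemma finite_upost: "finite (upost N x)"
proof -
  obtain t H where x: "x = (t,H)" by force
  have "upost N x \<subseteq> (\<lambda>(a,i). (a, CPair {|CTr t H|} i)) ` (set_mset (net_post N t) \<times> {0..size (net_post N t)})"
    unfolding upost_def x using count_le_size by (fastforce intro: order_trans)
  then show ?thesis by (rule finite_subset) auto
qed

lemma upost_form: "p \<in> upost N (t,H) \<Longrightarrow> \<exists>a i. p = (a, CPair {|CTr t H|} i)"
  unfolding upost_def by auto

lemma upost_init: "p \<in> upost N x \<Longrightarrow> p \<notin> initP m"
  unfolding upost_def initP_def by (cases x) auto

lemma upost_inj: "p \<in> upost N x \<Longrightarrow> p \<in> upost N y \<Longrightarrow> x = y"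
  unfolding upost_def by (cases x; cases y) auto

definition Inv :: "('s, 't) ptnet \<Rightarrow> 's multiset \<Rightarrow> ('s, 't) uplace multiset \<Rightarrow> ('s, 't) utrans set \<Rightarrow> bool" where
  "Inv N m M C \<longleftrightarrow> (\<forall>p. count M p \<le> 1) \<and>
     set_mset M = (initP m \<union> (\<Union>c\<in>C. upost N c)) - (\<Union>c\<in>C. fset (snd c)) \<and>
     (\<forall>c\<in>C. fset (snd c) \<subseteq> initP m \<union> (\<Union>c\<in>C. upost N c)) \<and>
     (\<forall>c1\<in>C. \<forall>c2\<in>C. c1 \<noteq> c2 \<longrightarrow> fset (snd c1) \<inter> fset (snd c2) = {}) \<and>
     finite C \<and> set_mset M \<subseteq> {p. uplaces N m p}"

lemma uflow_cases: "(a,b) \<in> uflow N \<Longrightarrow>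
  (\<exists>p t H. a = UP p \<and> b = UT (t,H) \<and> p |\<in>| H) \<or> (\<exists>x p. a = UT x \<and> b = UP p \<and> p \<in> upost N x)"
  unfolding uflow_def by blast

lemma anc:
  assumes cl: "\<forall>c\<in>C. fset (snd c) \<subseteq> initP m \<union> (\<Union>c\<in>C. upost N c)"
    and path: "(n, UP y) \<in> (uflow N)\<^sup>*" and y: "y \<in> initP m \<union> (\<Union>c\<in>C. upost N c)"
  shows "(\<forall>w. n = UT w \<longrightarrow> w \<in> C) \<and> (\<forall>q. n = UP q \<longrightarrow> q \<in> initP m \<union> (\<Union>c\<in>C. upost N c))"
  using path
proof (induction rule: converse_rtrancl_induct)
  case base
  then show ?case using y by simp
next
  case (step a b)
  from uflow_cases[OF step.hyps(1)] show ?case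
  proof (elim disjE exE conjE)
    fix p t H assume ab: "a = UP p" "b = UT (t,H)" and pH: "p |\<in>| H"
    from ab step.IH have "(t,H) \<in> C" by simp
    with cl pH have "p \<in> initP m \<union> (\<Union>c\<in>C. upost N c)" by force
    with ab show ?thesis by simp
  next
    fix x p assume ab: "a = UT x" "b = UP p" and px: "p \<in> upost N x"
    from ab step.IH have "p \<in> initP m \<union> (\<Union>c\<in>C. upost N c)" by simp
    moreover have "p \<notin> initP m" using upost_init[OF px] .
    ultimately obtain c where "c \<in> C" "p \<in> upost N c" by blast
    with upost_inj[OF px] have "x \<in> C" by simp
    with ab show ?thesis by simp
  qed
qed

lemma Inv_uCO:
  assumes I: "Inv N m M C" and H: "fset H \<subseteq> set_mset M"
  shows "uCO N H"
proof -
  have cl: "\<forall>c\<in>C. fset (snd c) \<subseteq> initP m \<union> (\<Union>c\<in>C. upost N c)"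
    and P: "set_mset M = (initP m \<union> (\<Union>c\<in>C. upost N c)) - (\<Union>c\<in>C. fset (snd c))"
    and dj: "\<forall>c1\<in>C. \<forall>c2\<in>C. c1 \<noteq> c2 \<longrightarrow> fset (snd c1) \<inter> fset (snd c2) = {}"
    and fC: "finite C"
    using I unfolding Inv_def by simp_all
  have inP: "x \<in> initP m \<union> (\<Union>c\<in>C. upost N c)" if "x |\<in>| H" for x
  proof -
    have "x \<in> set_mset M" using H that by blast
    then show ?thesis unfolding P by blast
  qed
  have belowC: "u \<in> C" if "x |\<in>| H" "ule N (UT u) (UP x)" for x u
  proof -
    have "(UT u, UP x) \<in> (uflow N)\<^sup>*" using that(2) unfolding ule_def .
    from anc[OF cl this inP[OF that(1)]] show ?thesis by simp
  qed
  have notle: "\<not> ule N (UP x) (UP y)" if "x |\<in>| H" "y |\<in>| H" "x \<noteq> y" for x y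
  proof
    assume "ule N (UP x) (UP y)"
    then have "(UP x, UP y) \<in> (uflow N)\<^sup>*" unfolding ule_def .
    then show False
    proof (cases rule: converse_rtranclE)
      case base then show False using that by simp
    next
      case (step z)
      from uflow_cases[OF step(1)] obtain t H' where z: "z = UT (t,H')" "x |\<in>| H'"
        by auto
      have "(t,H') \<in> C" using belowC[OF that(2)] step(2) z(1) unfolding ule_def by simp
      with z have "x \<in> (\<Union>c\<in>C. fset (snd c))" by force
      moreover have "x \<in> set_mset M" using H that(1) by blast
      ultimately show False unfolding P by blast
    qed
  qed
  have notconf: "\<not> uconfl N (UP x) (UP y)" if "x |\<in>| H" "y |\<in>| H" for x y
  proof
    assume "uconfl N (UP x) (UP y)"
    then obtain t1 H1 t2 H2 where a: "ule N (UT (t1, H1)) (UP x)" "ule N (UT (t2, H2)) (UP y)"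
      "(t1, H1) \<noteq> (t2, H2)" "H1 |\<inter>| H2 \<noteq> {||}" unfolding uconfl_def by blast
    have c: "(t1,H1) \<in> C" "(t2,H2) \<in> C" using belowC that a by auto
    have "fset (H1 |\<inter>| H2) \<noteq> {}" using a(4) by (metis bot_fset.rep_eq fset_inject)
    then show False using dj c a(3) by (metis inter_fset snd_conv)
  qed
  have fin: "finite {u. \<exists>x. x |\<in>| H \<and> ule N (UT u) (UP x)}"
    using fC by (rule finite_subset[rotated]) (auto intro: belowC)
  show ?thesis unfolding uCO_def uco_def using notle notconf fin by blast
qed



definition xsN :: "('s, 't) ptnet \<Rightarrow> 't \<Rightarrow> 's list" where
  "xsN N t = (SOME xs. mset xs = net_pre N t)"

lemma mset_xsN: "mset (xsN N t) = net_pre N t"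
  unfolding xsN_def by (rule someI_ex) (rule ex_mset)

lemma enc_pre_eq: "enc_pre N t = mset (map (\<lambda>i. (xsN N t ! i, CVar i)) [0..<length (xsN N t)])"
  unfolding enc_pre_def xsN_def Let_def ..

lemma msubst_pre: "msubst \<sigma> (enc_pre N t) =
   mset (map (\<lambda>i. (xsN N t ! i, csubst \<sigma> (CVar i))) [0..<length (xsN N t)])"
  apply (simp only: msubst_def enc_pre_eq mset_map[symmetric] map_map)
  apply (rule arg_cong[where f=mset])
  apply (rule map_cong)
   apply simp_all
  done

lemma fst_msubst_pre: "image_mset fst (msubst \<sigma> (enc_pre N t)) = net_pre N t"
proof -
  have "image_mset fst (msubst \<sigma> (enc_pre N t)) = mset (map (\<lambda>i. xsN N t ! i) [0..<length (xsN N t)])"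
    apply (simp only: msubst_pre mset_map[symmetric] map_map)
    apply (rule arg_cong[where f=mset])
    apply (rule map_cong)
     apply simp_all
    done
  also have "\<dots> = mset (xsN N t)" by (simp add: map_nth)
  finally show ?thesis by (simp add: mset_xsN)
qed

lemma fset_of_mset_subst:
  assumes "fset H = set_mset (msubst \<sigma> E)"
  shows "fimage (map_prod id (csubst \<sigma>)) (fset_of_mset E) = H"
proof -
  have "fset (fset_of_mset E) = set_mset E" unfolding fset_of_mset_def
    by (rule Abs_fset_inverse) simp
  then have "fset (fimage (map_prod id (csubst \<sigma>)) (fset_of_mset E)) = fset H"
    using assms by (simp add: msubst_def fimage.rep_eq)
  then show ?thesis by (metis fset_inject)
qed

lemma msubst_post:
  fixes N :: "('s, 't) ptnet"
  assumes "fset H = set_mset (msubst \<sigma> (enc_pre N t))"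
  shows "msubst \<sigma> (enc_post N t) = mset_set (upost N (t,H))"
proof -
  define X where "X = CTr t (fset_of_mset (enc_pre N t))"
  define S where "S = {(a, CPair {| X |} i) | a i. a \<in># net_post N t \<and> 1 \<le> i \<and> i \<le> count (net_post N t) a}"
  define g :: "('s \<times> ('s, 't) colour) \<Rightarrow> ('s \<times> ('s, 't) colour)" where "g = map_prod id (csubst \<sigma>)"
  have cX: "csubst \<sigma> X = CTr t H"
    unfolding X_def using fset_of_mset_subst[OF assms] by simp
  define Q where "Q = {(a, i). a \<in># net_post N t \<and> 1 \<le> i \<and> i \<le> count (net_post N t) a}"
  define f where "f = (\<lambda>(a::'s, i::nat). (a, CPair {| X |} i))"
  define f' where "f' = (\<lambda>(a::'s, i::nat). (a, CPair {| CTr t H |} i))"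
  have SQ: "S = f ` Q" unfolding S_def Q_def f_def by force
  have UQ: "upost N (t,H) = f' ` Q" unfolding upost_def Q_def f'_def by auto
  have gf: "g \<circ> f = f'" unfolding g_def f_def f'_def using cX by (auto simp: fun_eq_iff)
  have inj: "inj_on g S"
  proof
    fix p q assume "p \<in> S" "q \<in> S" "g p = g q"
    then show "p = q" unfolding SQ using gf by (auto simp: f_def f'_def fun_eq_iff split: prod.splits)
  qed
  have img: "g ` S = upost N (t,H)" unfolding SQ UQ image_comp gf ..
  have "msubst \<sigma> (enc_post N t) = image_mset g (mset_set S)"
    unfolding msubst_def enc_post_def g_def S_def X_def ..
  also have "\<dots> = mset_set (upost N (t,H))" using image_mset_mset_set[OF inj] img by simp
  finally show ?thesis .
qed

lemma perm_map:
  "mset (map f ys) = mset xs \<Longrightarrow> \<exists>zs. mset zs = mset ys \<and> map f zs = xs"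
proof (induction xs arbitrary: ys)
  case Nil then show ?case by simp
next
  case (Cons x xs)
  have "x \<in># mset (map f ys)" using Cons.prems by simp
  then obtain y where y: "y \<in> set ys" "f y = x" by auto
  have "mset (map f (remove1 y ys)) = mset xs"
    using Cons.prems y by (simp add: mset_map mset_remove1 image_mset_Diff)
  then obtain zs where "mset zs = mset (remove1 y ys)" "map f zs = xs" using Cons.IH by blast
  then show ?case using y by (intro exI[of _ "y # zs"]) simp
qed

lemma exists_sigma:
  fixes N :: "('a, 'b) ptnet" and H :: "('a \<times> ('a, 'b) colour) fset"
  assumes "image_mset fst (mset_set (fset H)) = net_pre N t"
  shows "\<exists>\<sigma>. msubst \<sigma> (enc_pre N t) = mset_set (fset H)"
proof -
  obtain hs0 where hs0: "distinct hs0" "set hs0 = fset H" using finite_distinct_list[OF finite_fset, of H] by auto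
  have h0: "mset hs0 = mset_set (fset H)" using mset_set_set[OF hs0(1)] hs0(2) by simp
  have "mset (map fst hs0) = image_mset fst (mset_set (fset H))" unfolding mset_map h0 ..
  also have "\<dots> = mset (xsN N t)" by (simp only: assms mset_xsN)
  finally have "mset (map fst hs0) = mset (xsN N t)" .
  then obtain hs where hs: "mset hs = mset hs0" "map fst hs = xsN N t" using perm_map by blast
  define \<sigma> :: "nat \<Rightarrow> ('a, 'b) colour option" where "\<sigma> = (\<lambda>i. Some (snd (hs ! i)))"
  have len: "length hs = length (xsN N t)" using hs(2) by (metis length_map)
  have "msubst \<sigma> (enc_pre N t) = mset (map (\<lambda>i. (xsN N t ! i, snd (hs ! i))) [0..<length (xsN N t)])"
    unfolding msubst_pre \<sigma>_def csubst.simps option.case by (rule refl)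
  also have "map (\<lambda>i. (xsN N t ! i, snd (hs ! i))) [0..<length (xsN N t)] = map (\<lambda>i. hs ! i) [0..<length hs]"
  proof (rule nth_equalityI)
    fix i assume "i < length (map (\<lambda>i. (xsN N t ! i, snd (hs ! i))) [0..<length (xsN N t)])"
    then have i: "i < length hs" using len by simp
    have "xsN N t ! i = fst (hs ! i)" using hs(2) i by (metis nth_map)
    then show "map (\<lambda>i. (xsN N t ! i, snd (hs ! i))) [0..<length (xsN N t)] ! i = map (\<lambda>i. hs ! i) [0..<length hs] ! i"
      using i len by simp
  qed (simp add: len)
  also have "\<dots> = hs" by (rule map_nth)
  finally have "msubst \<sigma> (enc_pre N t) = mset hs" .
  then show ?thesis unfolding hs(1) h0 by blast
qed

lemma set_mset_eq: "(\<forall>p. count E p \<le> 1) \<Longrightarrow> E = mset_set (set_mset E)"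
proof (rule multiset_eqI)
  fix p assume "\<forall>p. count E p \<le> 1"
  then have "count E p \<le> 1" by blast
  then show "count E p = count (mset_set (set_mset E)) p"
  proof (cases "p \<in># E")
    case True
    then have "0 < count E p" by simp
    with \<open>count E p \<le> 1\<close> have "count E p = 1" by linarith
    with True show ?thesis by (simp add: count_mset_set)
  next
    case False then show ?thesis by (simp add: count_mset_set not_in_iff)
  qed
qed



lemma Inv_init: "Inv N m (mset_set (initP m)) {}"
proof -
  have f: "finite (initP m)" by (rule finite_initP)
  have c: "count (mset_set (initP m)) p \<le> 1" for p
    by (cases "p \<in> initP m") (simp_all add: count_mset_set(1)[OF f] count_mset_set(3))
  have u: "initP m \<subseteq> {p. uplaces N m p}"
    unfolding initP_def by (auto intro: uplaces_utransitions.init)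
  have s: "set_mset (mset_set (initP m)) = initP m" using finite_set_mset_mset_set[OF f] .
  have c': "\<forall>p. count (mset_set (initP m)) p \<le> 1" using c by blast
  show ?thesis unfolding Inv_def s using c' u by simp
qed

lemma ut_inv: "utransitions N m (t,H) \<Longrightarrow> t \<in> net_trans N \<and> (\<forall>p. p |\<in>| H \<longrightarrow> uplaces N m p)
   \<and> image_mset fst (mset_set (fset H)) = net_pre N t"
  by (subst (asm) utransitions.simps) auto

lemma Inv_step:
  assumes I: "Inv N m M C" and ut: "utransitions N m (t,H)" and ne: "fset H \<noteq> {}"
    and M: "M = mset_set (fset H) + m3" and M': "M' = mset_set (upost N (t,H)) + m3"
  shows "Inv N m M' (insert (t,H) C)"
proof -
  define IU where "IU = initP m \<union> (\<Union>c\<in>C. upost N c)"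
  define PRE where "PRE = (\<Union>c\<in>C. fset (snd c))"
  define U where "U = upost N (t,H)"
  have cnt: "\<forall>p. count M p \<le> 1"
    and P: "set_mset M = IU - PRE"
    and cl: "\<forall>c\<in>C. fset (snd c) \<subseteq> IU"
    and dj: "\<forall>c1\<in>C. \<forall>c2\<in>C. c1 \<noteq> c2 \<longrightarrow> fset (snd c1) \<inter> fset (snd c2) = {}"
    and fC: "finite C" and up: "set_mset M \<subseteq> {p. uplaces N m p}"
    using I unfolding Inv_def IU_def PRE_def by blast+
  have HP: "fset H \<subseteq> set_mset M" unfolding M by simp
  have m3P: "set_mset m3 \<subseteq> set_mset M" unfolding M by simp
  have m3set: "set_mset m3 = set_mset M - fset H"
  proof (intro equalityI subsetI)
    fix p assume p: "p \<in># m3"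
    have "p \<notin> fset H"
    proof
      assume "p \<in> fset H"
      then have "count M p = 1 + count m3 p" unfolding M by (simp add: count_mset_set)
      moreover have "count m3 p > 0" using p by simp
      ultimately show False using cnt by (metis add_le_same_cancel1 not_less)
    qed
    with p m3P show "p \<in> set_mset M - fset H" by blast
  next
    fix p assume "p \<in> set_mset M - fset H"
    then show "p \<in># m3" unfolding M by auto
  qed
  have PRE_IU: "PRE \<subseteq> IU" using cl unfolding PRE_def by blast
  have notin: "(t,H) \<notin> C"
  proof
    assume "(t,H) \<in> C"
    then have "fset H \<subseteq> PRE" unfolding PRE_def by force
    with HP P ne show False by blast
  qed
  have UIU: "U \<inter> IU = {}"
  proof (intro equalityI subsetI)
    fix p assume "p \<in> U \<inter> IU"
    then have pU: "p \<in> upost N (t,H)" and "p \<in> IU" unfolding U_def by auto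
    have "p \<notin> initP m" using upost_init[OF pU] .
    with \<open>p \<in> IU\<close> obtain c where "c \<in> C" "p \<in> upost N c" unfolding IU_def by blast
    with upost_inj[OF pU] notin show "p \<in> {}" by simp
  qed simp
  have U_PRE: "U \<inter> PRE = {}" using UIU PRE_IU by blast
  have U_H: "U \<inter> fset H = {}" using UIU HP P by blast
  have fU: "finite U" unfolding U_def by (rule finite_upost)
  have cnt': "count M' p \<le> 1" for p
  proof (cases "p \<in> U")
    case True
    then have "p \<notin># m3" using UIU m3P P by blast
    then show ?thesis using True fU unfolding M' U_def[symmetric] by (simp add: count_mset_set not_in_iff)
  next
    case False
    have "count m3 p \<le> count M p" unfolding M by simp
    moreover have "count M' p = count m3 p" unfolding M' U_def[symmetric] using False by (simp add: count_mset_set(3))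
    moreover have "count M p \<le> 1" using cnt by blast
    ultimately show ?thesis by linarith
  qed
  have "set_mset M' = set_mset (mset_set U) \<union> set_mset m3" unfolding M' U_def[symmetric] by (rule set_mset_union)
  also have "\<dots> = U \<union> (set_mset M - fset H)" unfolding finite_set_mset_mset_set[OF fU] m3set ..
  finally have sM': "set_mset M' = U \<union> (set_mset M - fset H)" .
  have P': "set_mset M' = (IU \<union> U) - (PRE \<union> fset H)"
    unfolding sM' P using U_PRE U_H by blast
  have cl': "\<forall>c\<in>insert (t,H) C. fset (snd c) \<subseteq> IU \<union> U"
    using cl HP P by auto
  have dj': "\<forall>c1\<in>insert (t,H) C. \<forall>c2\<in>insert (t,H) C. c1 \<noteq> c2 \<longrightarrow> fset (snd c1) \<inter> fset (snd c2) = {}"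
  proof (intro ballI impI)
    fix c1 c2 assume c: "c1 \<in> insert (t,H) C" "c2 \<in> insert (t,H) C" "c1 \<noteq> c2"
    have HPRE: "fset H \<inter> fset (snd c) = {}" if "c \<in> C" for c
    proof -
      have "fset (snd c) \<subseteq> PRE" using that unfolding PRE_def by blast
      then show ?thesis using HP P by blast
    qed
    show "fset (snd c1) \<inter> fset (snd c2) = {}"
    proof (cases "c1 = (t,H)")
      case True
      then have "c2 \<in> C" using c by simp
      then show ?thesis using True HPRE by simp
    next
      case False
      then have c1C: "c1 \<in> C" using c by simp
      show ?thesis
      proof (cases "c2 = (t,H)")
        case True
        then show ?thesis using HPRE[OF c1C] by auto
      next
        case False
        then have "c2 \<in> C" using c by simp
        then show ?thesis using dj c1C c(3) by blast
      qed
    qed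
  qed
  have upU: "U \<subseteq> {p. uplaces N m p}"
    unfolding U_def using ut by (auto intro: uplaces_utransitions.post)
  have up': "set_mset M' \<subseteq> {p. uplaces N m p}" unfolding sM' using upU up by blast
  have e1: "initP m \<union> (\<Union>c\<in>insert (t,H) C. upost N c) = IU \<union> U" unfolding IU_def U_def by auto
  have e2: "(\<Union>c\<in>insert (t,H) C. fset (snd c)) = PRE \<union> fset H" unfolding PRE_def by auto
  show ?thesis unfolding Inv_def e1 e2
    using cnt' P' cl' dj' fC up' by simp
qed

lemma Inv_equiv:
  assumes wf: "wf_ptnet N" and I: "Inv N m M C"
  shows "cstep (enc_net N) M x M' \<longleftrightarrow> ptstep (unfold_net N m) M x M'"
proof -
  obtain t H where x: "x = (t,H)" by force
  have cnt: "\<forall>p. count M p \<le> 1" and up: "set_mset M \<subseteq> {p. uplaces N m p}"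
    using I unfolding Inv_def by blast+
  have cs: "cstep (enc_net N) M x M' \<longleftrightarrow> t \<in> net_trans N \<and> (\<exists>\<sigma> m3. M = msubst \<sigma> (enc_pre N t) + m3 \<and>
      M' = msubst \<sigma> (enc_post N t) + m3 \<and> fset H = set_mset (msubst \<sigma> (enc_pre N t)))"
    unfolding cstep_def x enc_net_def by simp
  have ps: "ptstep (unfold_net N m) M x M' \<longleftrightarrow> utransitions N m (t,H) \<and>
      (\<exists>m3. M = mset_set (fset H) + m3 \<and> M' = mset_set (upost N (t,H)) + m3)"
    unfolding ptstep_def x unfold_net_def by simp
  show ?thesis
  proof
    assume "cstep (enc_net N) M x M'"
    then obtain \<sigma> m3 where t: "t \<in> net_trans N" and M: "M = msubst \<sigma> (enc_pre N t) + m3"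
      and M': "M' = msubst \<sigma> (enc_post N t) + m3" and H: "fset H = set_mset (msubst \<sigma> (enc_pre N t))"
      using cs by blast
    define E where "E = msubst \<sigma> (enc_pre N t)"
    have "\<forall>p. count E p \<le> 1"
    proof
      fix p have "count E p \<le> count M p" unfolding M E_def by simp
      then show "count E p \<le> 1" using cnt by (metis le_trans)
    qed
    then have EH: "E = mset_set (fset H)" using set_mset_eq H unfolding E_def by metis
    have HM: "fset H \<subseteq> set_mset M" unfolding M H by simp
    have "utransitions N m (t,H)"
    proof (rule uplaces_utransitions.trans)
      show "t \<in> net_trans N" by (rule t)
      show "\<forall>p. p |\<in>| H \<longrightarrow> uplaces N m p" using HM up by blast
      show "uCO N H" using Inv_uCO[OF I HM] .
      show "image_mset fst (mset_set (fset H)) = net_pre N t"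
        using fst_msubst_pre[of \<sigma> N t] EH unfolding E_def by simp
    qed
    moreover have "M = mset_set (fset H) + m3" using M EH unfolding E_def by simp
    moreover have "M' = mset_set (upost N (t,H)) + m3" using M' msubst_post[OF H] by simp
    ultimately show "ptstep (unfold_net N m) M x M'" using ps by blast
  next
    assume "ptstep (unfold_net N m) M x M'"
    then obtain m3 where ut: "utransitions N m (t,H)" and M: "M = mset_set (fset H) + m3"
      and M': "M' = mset_set (upost N (t,H)) + m3" using ps by blast
    from ut_inv[OF ut] have t: "t \<in> net_trans N" and f: "image_mset fst (mset_set (fset H)) = net_pre N t"
      by simp_all
    obtain \<sigma> where s: "msubst \<sigma> (enc_pre N t) = mset_set (fset H)" using exists_sigma[OF f] by blast
    have H: "fset H = set_mset (msubst \<sigma> (enc_pre N t))" unfolding s by simp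
    have a: "M = msubst \<sigma> (enc_pre N t) + m3" using M s by simp
    have b: "M' = msubst \<sigma> (enc_post N t) + m3" using M' msubst_post[OF H] by simp
    show "cstep (enc_net N) M x M'"
      unfolding cs using t a b H by blast
  qed
qed

lemma Inv_next:
  assumes wf: "wf_ptnet N" and I: "Inv N m M C" and st: "ptstep (unfold_net N m) M x M'"
  shows "Inv N m M' (insert x C)"
proof -
  obtain t H where x: "x = (t,H)" by force
  from st obtain m3 where ut: "utransitions N m (t,H)" and M: "M = mset_set (fset H) + m3"
      and M': "M' = mset_set (upost N (t,H)) + m3"
    unfolding ptstep_def x unfold_net_def by auto
  from ut_inv[OF ut] have t: "t \<in> net_trans N" and f: "image_mset fst (mset_set (fset H)) = net_pre N t"
    by simp_all
  have "net_pre N t \<noteq> {#}" using wf t unfolding wf_ptnet_def by blast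
  then have "fset H \<noteq> {}" using f by auto
  from Inv_step[OF I ut this M M'] show ?thesis unfolding x .
qed

lemma main_ind:
  assumes wf: "wf_ptnet N"
  shows "Inv N m M C \<Longrightarrow> steps (cstep (enc_net N)) M s M'' \<longleftrightarrow> steps (ptstep (unfold_net N m)) M s M''"
proof (induction s arbitrary: M C)
  case Nil then show ?case by simp
next
  case (Cons x s)
  have "steps (cstep (enc_net N)) M (x # s) M'' \<longleftrightarrow>
        (\<exists>M1. cstep (enc_net N) M x M1 \<and> steps (cstep (enc_net N)) M1 s M'')" by simp
  also have "\<dots> \<longleftrightarrow> (\<exists>M1. ptstep (unfold_net N m) M x M1 \<and> steps (cstep (enc_net N)) M1 s M'')"
    using Inv_equiv[OF wf Cons.prems] by blast
  also have "\<dots> \<longleftrightarrow> (\<exists>M1. ptstep (unfold_net N m) M x M1 \<and> steps (ptstep (unfold_net N m)) M1 s M'')"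
    using Cons.IH Inv_next[OF wf Cons.prems] by blast
  also have "\<dots> \<longleftrightarrow> steps (ptstep (unfold_net N m)) M (x # s) M''" by simp
  finally show ?case .
qed

theorem mainTheorem14:
  fixes N :: "('s, 't) ptnet" and m :: "'s multiset"
  assumes "wf_ptnet N" and "wf_marking N m"
  shows "\<forall>(s :: ('s, 't) utrans list) (m'' :: ('s, 't) uplace multiset).
           steps (cstep (enc_net N)) (enc_marking m) s m''
           \<longleftrightarrow> steps (ptstep (unfold_net N m)) (unfold_marking m) s m''"
proof (intro allI)
  fix s :: "('s, 't) utrans list" and m'' :: "('s, 't) uplace multiset"
  have e1: "enc_marking m = mset_set (initP m)" unfolding enc_marking_def initP_def ..
  have e2: "unfold_marking m = mset_set (initP m)" unfolding unfold_marking_def initP_def ..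
  show "steps (cstep (enc_net N)) (enc_marking m) s m'' \<longleftrightarrow> steps (ptstep (unfold_net N m)) (unfold_marking m) s m''"
    unfolding e1 e2 using main_ind[OF assms(1) Inv_init] .
qed


end
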